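(* Let $a>0$ be a constant and let $x\in\{0,1\}^n$ have exactly $(\frac12+a)n$ bits equal to $1$. Let $x^k$ denote the $k$-th bitstring sampled by the hypermutation operator on input $x$, $k=1,\dots,n$. Then for any $c=\omega(\sqrt{\log n/n})$ with $c\in(0,a)$, with probability $1-e^{-\Omega(nc^2)}$ there exists $k\in\{n\frac{a-c}{2a-c},\dots,n\frac{a}{2a-c}\}$ such that $x^k$ has exactly $n/2$ bits equal to $1$.
   Context: The hypermutation operator on input $x\in\{0,1\}^n$ (disregarding its stopping rule) flips the $n$ bit positions one at a time in a uniformly random order, i.e. according to a uniformly random permutation of $\{1,\dots,n\}$; the $k$-th sampled bitstring $x^k$ is the string obtained from $x$ after the first $k$ of these flips. Asymptotics are as $n\to\infty$. *)

theory Defs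
  imports "HOL-Probability.Probability" "HOL-Library.Landau_Symbols"
begin

definition ones :: "bool list \<Rightarrow> nat" where
  "ones x = length (filter id x)"

text \<open>The k-th bitstring sampled by the hypermutation operator when the bit positions
  are flipped in the order given by the permutation \<sigma> of {0..<n}: positions
  \<sigma> 0, ..., \<sigma> (k-1) are flipped.\<close>
definition hyp_sample :: "(nat \<Rightarrow> nat) \<Rightarrow> nat \<Rightarrow> bool list \<Rightarrow> bool list" where
  "hyp_sample \<sigma> k x = map (\<lambda>i. if i \<in> \<sigma> ` {..<k} then \<not> x ! i else x ! i) [0..<length x]"

definition rand_perm :: "nat \<Rightarrow> (nat \<Rightarrow> nat) pmf" where
  "rand_perm n = pmf_of_set {\<sigma>. \<sigma> permutes {..<n}}"

end

theory Submission
  imports Defs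
begin


definition ffr :: "nat \<Rightarrow> nat \<Rightarrow> real" where
  "ffr b j = (\<Prod>i<j. real b - real i)"

lemma ffr_0 [simp]: "ffr b 0 = 1" by (simp add: ffr_def)

lemma ffr_Suc: "ffr b (Suc j) = ffr b j * (real b - real j)"
  by (simp add: ffr_def)

lemma ffr_Suc_Suc: "ffr (Suc b) (Suc j) = real (Suc b) * ffr b j"
  unfolding ffr_def by (subst prod.lessThan_Suc_shift) simp

lemma ffr_zero_Suc: "ffr 0 (Suc j) = 0"
  unfolding ffr_def by (subst prod.lessThan_Suc_shift) simp

lemma ffr_shift: "real b * ffr (b - 1) j = ffr b j * (real b - real j)"
proof (cases b)
  case 0 then show ?thesis
    using ffr_zero_Suc[of j] by (simp add: ffr_Suc)
next
  case (Suc b') then show ?thesis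
    using ffr_Suc_Suc[of b' j] ffr_Suc[of "Suc b'" j] by simp
qed

lemma ffr_nonneg: "ffr b j \<ge> 0"
proof (cases "j \<le> b")
  case True then show ?thesis unfolding ffr_def by (intro prod_nonneg) auto
next
  case False
  then have "b \<in> {..<j}" by simp
  then show ?thesis unfolding ffr_def by (subst prod_zero) auto
qed

lemma ffr_pos: "j \<le> b \<Longrightarrow> ffr b j > 0"
  unfolding ffr_def by (intro prod_pos) auto

lemma ffr_le: "b \<le> N \<Longrightarrow> j \<le> N \<Longrightarrow> ffr b j \<le> ffr N j * (real b / real N) ^ j"
proof (induction j)
  case 0 then show ?case by simp
next
  case (Suc j)
  then have IH: "ffr b j \<le> ffr N j * (real b / real N) ^ j" by simp
  show ?case
  proof (cases "b \<le> j")
    case True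
    then have "ffr b (Suc j) = 0"
    proof -
      have "b \<in> {..<Suc j}" using True by simp
      then show ?thesis unfolding ffr_def by (subst prod_zero) auto
    qed
    moreover have "ffr N (Suc j) * (real b / real N) ^ Suc j \<ge> 0"
      using ffr_nonneg by simp
    ultimately show ?thesis by simp
  next
    case False
    have N0: "real N > 0" using Suc.prems False by simp
    have f: "real b - real j \<le> (real N - real j) * (real b / real N)"
    proof -
      have "(real N - real j) * (real b / real N) = real b - real j * real b / real N"
        using N0 by (simp add: field_simps)
      moreover have "real j * real b / real N \<le> real j"
      proof -
        have "real b * real j \<le> real N * real j"
          by (intro mult_right_mono) (use Suc.prems in auto)
        then show ?thesis using N0 by (simp add: field_simps)
      qed
      ultimately show ?thesis by simp
    qed
    have "ffr b (Suc j) = ffr b j * (real b - real j)" by (rule ffr_Suc)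
    also have "\<dots> \<le> (ffr N j * (real b / real N) ^ j) * ((real N - real j) * (real b / real N))"
      using IH f False ffr_nonneg[of b j] by (intro mult_mono) auto
    also have "\<dots> = ffr N (Suc j) * (real b / real N) ^ Suc j"
      by (simp add: ffr_Suc)
    finally show ?thesis .
  qed
qed


lemma TS: "T - {0} = Suc ` {i. Suc i \<in> T}" 
proof (rule set_eqI, rule iffI)
  fix i assume "i \<in> T - {0}"
  then have "i = Suc (i - 1)" "Suc (i - 1) \<in> T" by auto
  then show "i \<in> Suc ` {i. Suc i \<in> T}" by blast
qed auto
lemma Pcons: "(\<forall>i\<in>T. (x # xs) ! i \<in> B) \<longleftrightarrow> ((0 \<in> T \<longrightarrow> x \<in> B) \<and> (\<forall>i\<in>{i. Suc i \<in> T}. xs ! i \<in> B))"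
proof
  assume "\<forall>i\<in>T. (x # xs) ! i \<in> B" then show "(0 \<in> T \<longrightarrow> x \<in> B) \<and> (\<forall>i\<in>{i. Suc i \<in> T}. xs ! i \<in> B)"
    by fastforce
next
  assume a: "(0 \<in> T \<longrightarrow> x \<in> B) \<and> (\<forall>i\<in>{i. Suc i \<in> T}. xs ! i \<in> B)"
  show "\<forall>i\<in>T. (x # xs) ! i \<in> B"
  proof
    fix i assume "i \<in> T" then show "(x # xs) ! i \<in> B" using a by (cases i) auto
  qed
qed

lemma perm_split_card:
  assumes "finite A" "A \<noteq> {}"
  shows "card {ys \<in> permutations_of_set A. P ys} =
         (\<Sum>x\<in>A. card {xs \<in> permutations_of_set (A - {x}). P (x # xs)})"
proof -
  have eq: "{ys \<in> permutations_of_set A. P ys} =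
        (\<Union>x\<in>A. (#) x ` {xs \<in> permutations_of_set (A - {x}). P (x # xs)})"
    using permutations_of_set_nonempty[OF assms(2)] by auto
  show ?thesis unfolding eq
    using assms(1)
    by (subst card_UN_disjoint) (auto simp: card_image)
qed

lemma perm_count:
  assumes "finite A" "T \<subseteq> {..<card A}"
  shows "real (card {ys \<in> permutations_of_set A. \<forall>i\<in>T. ys ! i \<in> B}) * ffr (card A) (card T)
         = fact (card A) * ffr (card (A \<inter> B)) (card T)"
  using assms
proof (induction "card A" arbitrary: A T)
  case 0
  then have "A = {}" "T = {}" by auto
  then show ?case by simp
next
  case (Suc N A T)
  define T' where "T' = {i. Suc i \<in> T}"
  define b where "b = card (A \<inter> B)"
  have finA: "finite A" and A0: "A \<noteq> {}" using Suc by auto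
  have T'sub: "T' \<subseteq> {..<N}" using Suc.prems Suc.hyps(2) by (auto simp: T'_def)
  have finT': "finite T'" using T'sub finite_subset by blast
  have TS: "T - {0} = Suc ` T'" unfolding T'_def by (rule TS)
  have cT': "card (T - {0}) = card T'" unfolding TS by (simp add: card_image)
  have Pcons: "(\<forall>i\<in>T. (x # xs) ! i \<in> B) \<longleftrightarrow> ((0 \<in> T \<longrightarrow> x \<in> B) \<and> (\<forall>i\<in>T'. xs ! i \<in> B))"
    for x xs
    unfolding T'_def by (rule Pcons)
  define c where "c x = real (card {xs \<in> permutations_of_set (A - {x}). \<forall>i\<in>T'. xs ! i \<in> B})" for x
  have IH: "c x * ffr N (card T') = fact N * ffr (card ((A - {x}) \<inter> B)) (card T')" if "x \<in> A" for x
  proof -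
    have cA: "card (A - {x}) = N" using that finA Suc.hyps(2) by simp
    have sub: "T' \<subseteq> {..<card (A - {x})}" using T'sub cA by simp
    show ?thesis unfolding c_def
      using Suc.hyps(1)[of "A - {x}" T', OF cA[symmetric] _ sub] finA cA by simp
  qed
  have bA: "b \<le> card A" unfolding b_def using finA by (intro card_mono) auto
  have cardAB: "card (A - B) = card A - b" unfolding b_def
    using finA by (simp add: card_Diff_subset_Int)
  have cnt: "real (card {ys \<in> permutations_of_set A. \<forall>i\<in>T. ys ! i \<in> B}) =
        (\<Sum>x\<in>A. if 0 \<in> T \<longrightarrow> x \<in> B then c x else 0)"
    unfolding perm_split_card[OF finA A0] Pcons c_def of_nat_sum
    by (intro sum.cong) auto
  show ?case
  proof (cases "0 \<in> T")
    case True
    have cT: "card T = Suc (card T')"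
      using card_Suc_Diff1[OF finite_subset[OF Suc.prems(2) finite_lessThan] True] cT' by simp
    have S: "(\<Sum>x\<in>A. if 0 \<in> T \<longrightarrow> x \<in> B then c x else 0) = (\<Sum>x\<in>A \<inter> B. c x)"
      using True finA by (simp add: sum.inter_restrict)
    have S2: "(\<Sum>x\<in>A \<inter> B. c x) * ffr N (card T') = real b * fact N * ffr (b - 1) (card T')"
    proof -
      have "(\<Sum>x\<in>A \<inter> B. c x) * ffr N (card T') = (\<Sum>x\<in>A \<inter> B. c x * ffr N (card T'))"
        by (simp add: sum_distrib_right)
      also have "\<dots> = (\<Sum>x\<in>A \<inter> B. fact N * ffr (b - 1) (card T'))"
      proof (intro sum.cong refl)
        fix x assume x: "x \<in> A \<inter> B"
        have "(A - {x}) \<inter> B = (A \<inter> B) - {x}" by auto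
        then have "card ((A - {x}) \<inter> B) = b - 1" unfolding b_def using x finA by simp
        then show "c x * ffr N (card T') = fact N * ffr (b - 1) (card T')" using IH x by simp
      qed
      also have "\<dots> = real b * fact N * ffr (b - 1) (card T')" by (simp add: b_def)
      finally show ?thesis .
    qed
    have "real (card {ys \<in> permutations_of_set A. \<forall>i\<in>T. ys ! i \<in> B}) * ffr (card A) (card T)
        = (\<Sum>x\<in>A \<inter> B. c x) * (real (Suc N) * ffr N (card T'))"
      unfolding cnt S cT Suc.hyps(2)[symmetric] ffr_Suc_Suc ..
    also have "\<dots> = real (Suc N) * (real b * fact N * ffr (b - 1) (card T'))"
      using S2 by (simp add: algebra_simps)
    also have "\<dots> = fact (Suc N) * (real b * ffr (b - 1) (card T'))"
      by (simp add: algebra_simps)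
    also have "real b * ffr (b - 1) (card T') = ffr b (Suc (card T'))"
      by (cases b) (simp_all add: ffr_Suc_Suc ffr_zero_Suc)
    finally show ?thesis unfolding cT Suc.hyps(2)[symmetric] b_def .
  next
    case False
    have cT: "card T = card T'" using False cT' by simp
    have jN: "card T' \<le> N" using card_mono[OF finite_lessThan T'sub] by simp
    have S2: "(\<Sum>x\<in>A. c x) * ffr N (card T') = fact N * ffr b (card T') * (real (Suc N) - real (card T'))"
    proof -
      have "(\<Sum>x\<in>A. c x) * ffr N (card T') = (\<Sum>x\<in>A. c x * ffr N (card T'))"
        by (simp add: sum_distrib_right)
      also have "\<dots> = (\<Sum>x\<in>A. fact N * ffr (if x \<in> B then b - 1 else b) (card T'))"
      proof (intro sum.cong refl)
        fix x assume x: "x \<in> A"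
        have "card ((A - {x}) \<inter> B) = (if x \<in> B then b - 1 else b)"
        proof (cases "x \<in> B")
          case True
          have "(A - {x}) \<inter> B = (A \<inter> B) - {x}" by auto
          then show ?thesis unfolding b_def using x True finA by simp
        next
          case False
          then have "(A - {x}) \<inter> B = A \<inter> B" by auto
          then show ?thesis using False b_def by simp
        qed
        then show "c x * ffr N (card T') = fact N * ffr (if x \<in> B then b - 1 else b) (card T')"
          using IH x by simp
      qed
      also have "\<dots> = (\<Sum>x\<in>A. if x \<in> B then fact N * ffr (b - 1) (card T') else fact N * ffr b (card T'))"
        by (intro sum.cong) auto
      also have "\<dots> = real b * (fact N * ffr (b - 1) (card T')) + real (card (A - B)) * (fact N * ffr b (card T'))"
        using finA by (simp add: sum.If_cases b_def Int_def Diff_eq)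
      also have "\<dots> = fact N * (real b * ffr (b - 1) (card T')) + real (card A - b) * (fact N * ffr b (card T'))"
        unfolding cardAB by (simp add: algebra_simps)
      also have "\<dots> = fact N * (ffr b (card T') * (real b - real (card T'))) + real (card A - b) * (fact N * ffr b (card T'))"
        using ffr_shift[of b "card T'"] by simp
      also have "\<dots> = fact N * ffr b (card T') * (real (Suc N) - real (card T'))"
        using bA Suc.hyps(2)[symmetric] by (simp add: algebra_simps of_nat_diff)
      finally show ?thesis .
    qed
    have pos: "real (Suc N) - real (card T') > 0" using jN by simp
    have F: "real (Suc N) * ffr N (card T') = ffr (Suc N) (card T') * (real (Suc N) - real (card T'))"
      using ffr_shift[of "Suc N" "card T'"] by simp
    have "real (card {ys \<in> permutations_of_set A. \<forall>i\<in>T. ys ! i \<in> B}) * ffr (card A) (card T)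
          * (real (Suc N) - real (card T'))
        = (\<Sum>x\<in>A. c x) * (real (Suc N) * ffr N (card T'))"
      unfolding cnt cT Suc.hyps(2)[symmetric] F using False by simp
    also have "\<dots> = real (Suc N) * ((\<Sum>x\<in>A. c x) * ffr N (card T'))" by (simp only: mult_ac)
    also have "\<dots> = real (Suc N) * (fact N * ffr b (card T') * (real (Suc N) - real (card T')))"
      unfolding S2 ..
    also have "\<dots> = fact (card A) * ffr b (card T) * (real (Suc N) - real (card T'))"
    proof -
      have fA: "fact (card A) = real (Suc N) * (fact N :: real)"
        unfolding Suc.hyps(2)[symmetric] by (simp only: fact_Suc of_nat_Suc)
      show ?thesis unfolding fA cT by (simp only: mult_ac)
    qed
    finally show ?thesis using pos unfolding b_def by simp
  qed
qed

lemma perm_count_le: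
  assumes "finite A" "T \<subseteq> {..<card A}"
  shows "real (card {ys \<in> permutations_of_set A. \<forall>i\<in>T. ys ! i \<in> B})
         \<le> fact (card A) * (real (card (A \<inter> B)) / real (card A)) ^ card T"
proof -
  have jN: "card T \<le> card A" using card_mono[OF finite_lessThan assms(2)] by simp
  have bN: "card (A \<inter> B) \<le> card A" using assms(1) by (intro card_mono) auto
  have p: "ffr (card A) (card T) > 0" using jN by (rule ffr_pos)
  have "real (card {ys \<in> permutations_of_set A. \<forall>i\<in>T. ys ! i \<in> B}) * ffr (card A) (card T)
       = fact (card A) * ffr (card (A \<inter> B)) (card T)" by (rule perm_count[OF assms])
  also have "\<dots> \<le> fact (card A) * (ffr (card A) (card T) * (real (card (A \<inter> B)) / real (card A)) ^ card T)"
    using ffr_le[OF bN jN] by (intro mult_left_mono) auto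
  finally show ?thesis using p by (simp add: algebra_simps)
qed



lemma prod_ind:
  fixes u :: real
  assumes "finite X"
  shows "(\<Prod>i\<in>X. u * (if P i then 1 else 0)) = (if \<forall>i\<in>X. P i then u ^ card X else 0)"
proof (cases "\<forall>i\<in>X. P i")
  case True
  then have "(\<Prod>i\<in>X. u * (if P i then 1 else 0)) = (\<Prod>i\<in>X. u)" by (intro prod.cong) auto
  then show ?thesis using True by simp
next
  case False
  then obtain i where "i \<in> X" "\<not> P i" by blast
  then show ?thesis using assms False by (subst prod_zero) auto
qed

lemma mgf_list:
  fixes u :: real
  assumes "finite A" "k \<le> card A" "u \<ge> 0"
  shows "(\<Sum>ys\<in>permutations_of_set A. \<Prod>i<k. u * (if ys ! i \<in> B then 1 else 0) + 1)
         \<le> fact (card A) * (u * (real (card (A \<inter> B)) / real (card A)) + 1) ^ k"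
proof -
  define p where "p = real (card (A \<inter> B)) / real (card A)"
  have p0: "p \<ge> 0" unfolding p_def by simp
  have exp: "(\<Prod>i<k. u * (if ys ! i \<in> B then 1 else 0) + 1)
        = (\<Sum>X\<in>Pow {..<k}. (if \<forall>i\<in>X. ys ! i \<in> B then u ^ card X else 0))" for ys
  proof -
    have "(\<Prod>i<k. u * (if ys ! i \<in> B then 1 else 0) + 1)
        = (\<Sum>X\<in>Pow {..<k}. (\<Prod>i\<in>X. u * (if ys ! i \<in> B then 1 else 0)) * (\<Prod>i\<in>{..<k} - X. 1))"
      by (rule prod_add) simp
    also have "\<dots> = (\<Sum>X\<in>Pow {..<k}. (if \<forall>i\<in>X. ys ! i \<in> B then u ^ card X else 0))"
      by (intro sum.cong refl) (auto simp: prod_ind finite_subset)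
    finally show ?thesis .
  qed
  have "(\<Sum>ys\<in>permutations_of_set A. \<Prod>i<k. u * (if ys ! i \<in> B then 1 else 0) + 1)
      = (\<Sum>ys\<in>permutations_of_set A. \<Sum>X\<in>Pow {..<k}. (if \<forall>i\<in>X. ys ! i \<in> B then u ^ card X else 0))"
    by (simp only: exp)
  also have "\<dots> = (\<Sum>X\<in>Pow {..<k}. \<Sum>ys\<in>permutations_of_set A. (if \<forall>i\<in>X. ys ! i \<in> B then u ^ card X else 0))"
    by (rule sum.swap)
  also have "\<dots> = (\<Sum>X\<in>Pow {..<k}. u ^ card X * real (card {ys \<in> permutations_of_set A. \<forall>i\<in>X. ys ! i \<in> B}))"
  proof (intro sum.cong refl)
    fix X
    have "(\<Sum>ys\<in>permutations_of_set A. (if \<forall>i\<in>X. ys ! i \<in> B then u ^ card X else 0))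
        = (\<Sum>ys\<in>{ys \<in> permutations_of_set A. \<forall>i\<in>X. ys ! i \<in> B}. u ^ card X)"
      using assms(1) by (subst sum.inter_filter) auto
    then show "(\<Sum>ys\<in>permutations_of_set A. (if \<forall>i\<in>X. ys ! i \<in> B then u ^ card X else 0))
        = u ^ card X * real (card {ys \<in> permutations_of_set A. \<forall>i\<in>X. ys ! i \<in> B})"
      by simp
  qed
  also have "\<dots> \<le> (\<Sum>X\<in>Pow {..<k}. u ^ card X * (fact (card A) * p ^ card X))"
  proof (intro sum_mono mult_left_mono)
    fix X assume "X \<in> Pow {..<k}"
    then have "X \<subseteq> {..<card A}" using assms(2) by auto
    then show "real (card {ys \<in> permutations_of_set A. \<forall>i\<in>X. ys ! i \<in> B}) \<le> fact (card A) * p ^ card X"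
      unfolding p_def by (rule perm_count_le[OF assms(1)])
  qed (use assms in auto)
  also have "\<dots> = fact (card A) * (\<Sum>X\<in>Pow {..<k}. (\<Prod>i\<in>X. u * p) * (\<Prod>i\<in>{..<k} - X. 1))"
    by (simp add: sum_distrib_left power_mult_distrib algebra_simps)
  also have "\<dots> = fact (card A) * (\<Prod>i<k. u * p + 1)"
    by (subst prod_add) simp_all
  also have "\<dots> = fact (card A) * (u * p + 1) ^ k" by simp
  finally show ?thesis unfolding p_def .
qed

lemma card_take_inter:
  assumes "distinct ys" "k \<le> length ys"
  shows "card (set (take k ys) \<inter> B) = card {i \<in> {..<k}. ys ! i \<in> B}"
proof -
  have "set (take k ys) \<inter> B = (!) ys ` {i \<in> {..<k}. ys ! i \<in> B}"
    using assms(2) by (auto simp: set_conv_nth) (metis nth_take)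
  moreover have "inj_on ((!) ys) {i \<in> {..<k}. ys ! i \<in> B}"
    using assms by (intro inj_on_nth) auto
  ultimately show ?thesis by (simp add: card_image)
qed

lemma tail_list:
  assumes "finite A" "0 < k" "k \<le> card A" "t \<ge> 0"
  shows "real (card {ys \<in> permutations_of_set A.
            real (card (set (take k ys) \<inter> B)) \<ge> real k * (real (card (A \<inter> B)) / real (card A)) + t})
         \<le> fact (card A) * exp (- 2 * t ^ 2 / real k)"
proof -
  define p where "p = real (card (A \<inter> B)) / real (card A)"
  define h where "h = 4 * t / real k"
  define u where "u = exp h - 1"
  define s where "s = real k * p + t"
  define X where "X ys = real (card (set (take k ys) \<inter> B))" for ys
  define E where "E = {ys \<in> permutations_of_set A. X ys \<ge> s}"
  have p0: "p \<ge> 0" unfolding p_def by simp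
  have h0: "h \<ge> 0" unfolding h_def using assms by simp
  have u0: "u \<ge> 0" unfolding u_def using h0 by simp
  have finP: "finite (permutations_of_set A)" using assms(1) by simp
  have key: "exp (h * X ys) = (\<Prod>i<k. u * (if ys ! i \<in> B then 1 else 0) + 1)"
    if ys: "ys \<in> permutations_of_set A" for ys
  proof -
    have d: "distinct ys" "length ys = card A" using ys
      by (auto simp: permutations_of_set_def distinct_card)
    have "X ys = real (card {i \<in> {..<k}. ys ! i \<in> B})"
      unfolding X_def using card_take_inter[OF d(1)] d(2) assms(3) by simp
    then have "exp (h * X ys) = exp h ^ card {i \<in> {..<k}. ys ! i \<in> B}"
      by (simp add: exp_of_nat_mult[symmetric] mult.commute)
    also have "\<dots> = (\<Prod>i<k. (if ys ! i \<in> B then exp h else 1))"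
      by (simp add: prod.If_cases Int_def)
    also have "\<dots> = (\<Prod>i<k. u * (if ys ! i \<in> B then 1 else 0) + 1)"
      unfolding u_def by (intro prod.cong) auto
    finally show ?thesis .
  qed
  have "real (card E) * exp (h * s) = (\<Sum>ys\<in>E. exp (h * s))" by simp
  also have "\<dots> \<le> (\<Sum>ys\<in>E. exp (h * X ys))"
    unfolding E_def using h0 by (intro sum_mono) (auto intro: mult_left_mono)
  also have "\<dots> \<le> (\<Sum>ys\<in>permutations_of_set A. exp (h * X ys))"
    unfolding E_def using finP by (intro sum_mono2) auto
  also have "\<dots> = (\<Sum>ys\<in>permutations_of_set A. \<Prod>i<k. u * (if ys ! i \<in> B then 1 else 0) + 1)"
    using key by (intro sum.cong) auto
  also have "\<dots> \<le> fact (card A) * (u * p + 1) ^ k"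
    unfolding p_def using mgf_list[OF assms(1) assms(3) u0] .
  also have "\<dots> \<le> fact (card A) * exp (h * p + h ^ 2 / 8) ^ k"
  proof -
    have pos: "1 + p * (exp h - 1) > 0" using p0 h0 by (intro add_pos_nonneg) auto
    have "- h * p + ln (1 + p * (exp h - 1)) \<le> h ^ 2 / 8"
      using Hoeffdings_lemma_aux[OF h0 p0] by simp
    then have "ln (u * p + 1) \<le> h * p + h ^ 2 / 8" unfolding u_def by (simp add: algebra_simps)
    then have "u * p + 1 \<le> exp (h * p + h ^ 2 / 8)"
      using pos unfolding u_def by (metis add.commute exp_le_cancel_iff exp_ln mult.commute)
    then show ?thesis using u0 p0 by (intro mult_left_mono power_mono) auto
  qed
  also have "\<dots> = fact (card A) * exp (real k * (h * p + h ^ 2 / 8))"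
    by (simp add: exp_of_nat_mult)
  finally have "real (card E) * exp (h * s) \<le> fact (card A) * exp (real k * (h * p + h ^ 2 / 8))" .
  then have "real (card E) \<le> fact (card A) * exp (real k * (h * p + h ^ 2 / 8)) / exp (h * s)"
    by (simp add: field_simps)
  also have "\<dots> = fact (card A) * exp (real k * (h * p + h ^ 2 / 8) - h * s)"
    by (simp add: exp_diff)
  also have "real k * (h * p + h ^ 2 / 8) - h * s = - 2 * t ^ 2 / real k"
    unfolding s_def h_def using assms(2) by (simp add: field_simps power2_eq_square)
  finally show ?thesis unfolding E_def X_def s_def p_def .
qed



lemma take_map_perm:
  assumes "k \<le> n"
  shows "set (take k (map \<sigma> [0..<n])) = \<sigma> ` {..<k}"
proof -
  have "take k (map \<sigma> [0..<n]) = map \<sigma> [0..<k]"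
    using assms by (simp add: take_map)
  then show ?thesis by auto
qed

lemma perm_list_card:
  assumes "k \<le> n"
  shows "card {\<sigma>. \<sigma> permutes {..<n} \<and> Q (\<sigma> ` {..<k})}
       = card {ys \<in> permutations_of_set {..<n}. Q (set (take k ys))}"
proof (rule bij_betw_same_card[of "\<lambda>\<sigma>. map \<sigma> [0..<n]"])
  show "bij_betw (\<lambda>\<sigma>. map \<sigma> [0..<n]) {\<sigma>. \<sigma> permutes {..<n} \<and> Q (\<sigma> ` {..<k})}
          {ys \<in> permutations_of_set {..<n}. Q (set (take k ys))}"
    unfolding bij_betw_def
  proof
    show "inj_on (\<lambda>\<sigma>. map \<sigma> [0..<n]) {\<sigma>. \<sigma> permutes {..<n} \<and> Q (\<sigma> ` {..<k})}"
    proof (rule inj_onI)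
      fix \<sigma> \<tau> assume s: "\<sigma> \<in> {\<sigma>. \<sigma> permutes {..<n} \<and> Q (\<sigma> ` {..<k})}"
        and t: "\<tau> \<in> {\<sigma>. \<sigma> permutes {..<n} \<and> Q (\<sigma> ` {..<k})}"
        and eq: "map \<sigma> [0..<n] = map \<tau> [0..<n]"
      show "\<sigma> = \<tau>"
      proof
        fix i show "\<sigma> i = \<tau> i"
        proof (cases "i < n")
          case True
          then have "map \<sigma> [0..<n] ! i = map \<tau> [0..<n] ! i" using eq by simp
          then show ?thesis using True by simp
        next
          case False
          then show ?thesis using s t permutes_not_in[of \<sigma> "{..<n}" i] permutes_not_in[of \<tau> "{..<n}" i]
            by auto
        qed
      qed
    qed
  next
    show "(\<lambda>\<sigma>. map \<sigma> [0..<n]) ` {\<sigma>. \<sigma> permutes {..<n} \<and> Q (\<sigma> ` {..<k})}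
        = {ys \<in> permutations_of_set {..<n}. Q (set (take k ys))}"
    proof (rule set_eqI, rule iffI)
      fix ys assume "ys \<in> (\<lambda>\<sigma>. map \<sigma> [0..<n]) ` {\<sigma>. \<sigma> permutes {..<n} \<and> Q (\<sigma> ` {..<k})}"
      then obtain \<sigma> where s: "\<sigma> permutes {..<n}" "Q (\<sigma> ` {..<k})" and ys: "ys = map \<sigma> [0..<n]"
        by auto
      have "distinct ys" unfolding ys using permutes_inj_on[OF s(1)] by (simp add: distinct_map)
      moreover have "set ys = {..<n}" unfolding ys using permutes_image[OF s(1)] by (auto simp: atLeast0LessThan)
      moreover have "Q (set (take k ys))" unfolding ys take_map_perm[OF assms] by (rule s(2))
      ultimately show "ys \<in> {ys \<in> permutations_of_set {..<n}. Q (set (take k ys))}"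
        by (simp add: permutations_of_set_def)
    next
      fix ys assume "ys \<in> {ys \<in> permutations_of_set {..<n}. Q (set (take k ys))}"
      then have d: "distinct ys" "set ys = {..<n}" and q: "Q (set (take k ys))"
        by (auto simp: permutations_of_set_def)
      have len: "length ys = n" using distinct_card[OF d(1)] d(2) by simp
      define \<sigma> where "\<sigma> i = (if i < n then ys ! i else i)" for i
      have m: "map \<sigma> [0..<n] = ys" using len by (intro nth_equalityI) (auto simp: \<sigma>_def)
      have "bij_betw \<sigma> {..<n} {..<n}"
      proof (rule bij_betw_imageI)
        show "inj_on \<sigma> {..<n}" using d(1) len by (auto simp: inj_on_def \<sigma>_def nth_eq_iff_index_eq)
        have "\<sigma> ` {..<n} = set (map \<sigma> [0..<n])" by auto
        then show "\<sigma> ` {..<n} = {..<n}" using m d(2) by simp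
      qed
      then have p: "\<sigma> permutes {..<n}" by (rule bij_imp_permutes) (simp add: \<sigma>_def)
      have "Q (\<sigma> ` {..<k})" using q unfolding m[symmetric] take_map_perm[OF assms] .
      then show "ys \<in> (\<lambda>\<sigma>. map \<sigma> [0..<n]) ` {\<sigma>. \<sigma> permutes {..<n} \<and> Q (\<sigma> ` {..<k})}"
        using p m by (intro image_eqI[of _ _ \<sigma>]) auto
    qed
  qed
qed

lemma card_split_disj:
  assumes "finite A"
  shows "card A = card (A - B) + card (A \<inter> B)"
proof -
  have "A = (A - B) \<union> (A \<inter> B)" by auto
  then have "card A = card ((A - B) \<union> (A \<inter> B))" by simp
  also have "\<dots> = card (A - B) + card (A \<inter> B)"
    using assms by (intro card_Un_disjoint) auto
  finally show ?thesis .
qed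

lemma ones_hyp:
  assumes "\<sigma> permutes {..<n}" "length x = n" "k \<le> n"
  shows "int (ones (hyp_sample \<sigma> k x)) =
         int (card {i. i < n \<and> x ! i}) + int k - 2 * int (card (\<sigma> ` {..<k} \<inter> {i. i < n \<and> x ! i}))"
proof -
  define S where "S = \<sigma> ` {..<k}"
  define On where "On = {i. i < n \<and> x ! i}"
  have Ssub: "S \<subseteq> {..<n}" unfolding S_def using permutes_image[OF assms(1)] assms(3) by auto
  have cS: "card S = k" unfolding S_def using permutes_inj_on[OF assms(1)] by (simp add: card_image)
  have finS: "finite S" and finOn: "finite On" using Ssub finite_subset unfolding On_def by auto
  have "ones (hyp_sample \<sigma> k x) = card {i. i < n \<and> (if i \<in> S then \<not> x ! i else x ! i)}"
    unfolding ones_def hyp_sample_def length_filter_conv_card S_def using assms(2) by (intro arg_cong[where f=card]) auto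
  also have "{i. i < n \<and> (if i \<in> S then \<not> x ! i else x ! i)} = (On - S) \<union> (S - On)"
    using Ssub unfolding On_def by auto
  also have "card ((On - S) \<union> (S - On)) = card (On - S) + card (S - On)"
    using finS finOn by (intro card_Un_disjoint) auto
  finally have "ones (hyp_sample \<sigma> k x) = card (On - S) + card (S - On)" .
  moreover have "card On = card (On - S) + card (S \<inter> On)" using card_split_disj[OF finOn, of S]
    by (simp add: Int_commute)
  moreover have "card S = card (S - On) + card (S \<inter> On)" using card_split_disj[OF finS, of On] .
  ultimately show ?thesis using cS unfolding S_def[symmetric] On_def[symmetric] by simp
qed



lemma window:
  fixes a c :: real and n :: nat
  assumes "a > 0" "0 < c" "c < a" "real n * c \<ge> 8 * a"
  shows "real n * (a - c) / (2*a - c) > 0" "real n * a / (2*a - c) \<le> real n"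
    "real n * a / (2*a - c) - real n * (a - c) / (2*a - c) \<ge> 1"
    "a * (real n / 2 - (real n * (a - c) / (2*a - c) + 1)) \<ge> real n * c / 8"
    "a * ((real n * a / (2*a - c) - 1) - real n / 2) \<ge> real n * c / 8"
proof -
  define d where "d = 2 * a - c"
  have d0: "d > 0" and d2: "d \<le> 2 * a" unfolding d_def using assms by auto
  have n0: "real n > 0"
  proof (rule ccontr)
    assume "\<not> real n > 0" then have "n = 0" by simp
    then show False using assms by simp
  qed
  have nc0: "real n * c > 0" using n0 assms by simp
  have e1: "real n / 2 - real n * (a - c) / d = real n * c / (2 * d)"
    using d0 unfolding d_def by (simp add: field_simps)
  have e2: "real n * a / d - real n / 2 = real n * c / (2 * d)"
    using d0 unfolding d_def by (simp add: field_simps)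
  have e3: "real n * a / d - real n * (a - c) / d = real n * c / d"
    using d0 by (simp add: field_simps)
  have g1: "real n * c / (2 * d) \<ge> real n * c / (4 * a)"
    using d0 d2 nc0 by (intro divide_left_mono) auto
  have g2: "real n * c / d \<ge> real n * c / (2 * a)"
    using d0 d2 nc0 by (intro divide_left_mono) auto
  have g3: "real n * c / (2 * a) \<ge> 4" using assms by (simp add: field_simps)
  have g4: "a * (real n * c / (4 * a) - 1) \<ge> real n * c / 8"
  proof -
    have "a * (real n * c / (4 * a) - 1) = real n * c / 4 - a" using assms by (simp add: field_simps)
    then show ?thesis using assms(4) by linarith
  qed
  have g5: "a * (real n * c / (2 * d) - 1) \<ge> a * (real n * c / (4 * a) - 1)"
    using g1 assms by (intro mult_left_mono) auto
  show "real n * (a - c) / (2*a - c) > 0" using d0 n0 assms unfolding d_def[symmetric] by simp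
  show "real n * a / (2*a - c) \<le> real n"
    using d0 n0 assms unfolding d_def[symmetric] by (simp add: field_simps d_def)
  show "real n * a / (2*a - c) - real n * (a - c) / (2*a - c) \<ge> 1"
    unfolding d_def[symmetric] using e3 g2 g3 by linarith
  show "a * (real n / 2 - (real n * (a - c) / (2*a - c) + 1)) \<ge> real n * c / 8"
  proof -
    have "real n / 2 - (real n * (a - c) / (2*a - c) + 1) = real n * c / (2 * d) - 1"
      using e1 unfolding d_def by linarith
    then show ?thesis using g4 g5 by (simp only:)
  qed
  show "a * ((real n * a / (2*a - c) - 1) - real n / 2) \<ge> real n * c / 8"
  proof -
    have "(real n * a / (2*a - c) - 1) - real n / 2 = real n * c / (2 * d) - 1"
      using e2 unfolding d_def by linarith
    then show ?thesis using g4 g5 by (simp only:)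
  qed
qed



lemma lin_aux: fixes Z k q t a n m H F :: real
  assumes "Z < k * q + t" "k * q = k / 2 - a * k" "t \<le> a * (k - n / 2)" "a * (k - n / 2) = a * k - a * n / 2"
   "Z = k - H" "F = m + k - 2 * H" "m = n / 2 + a * n"
  shows "F < n / 2"
  using assms by linarith

lemma main_n:
  fixes a c :: real and n :: nat and x :: "bool list"
  assumes a0: "a > 0" and c0: "0 < c" and ca: "c < a" and nc: "real n * c \<ge> 8 * a"
    and nc2: "real n * c^2 \<ge> 64 * ln 2"
    and lx: "length x = n" and ev: "even n" and ox: "real (ones x) = (1/2 + a) * real n"
  shows "measure_pmf.prob (rand_perm n)
             {\<sigma>. \<exists>k. 1 \<le> k \<and> k \<le> n \<and>
                  real n * (a - c) / (2 * a - c) \<le> real k \<and>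
                  real k \<le> real n * a / (2 * a - c) \<and>
                  2 * ones (hyp_sample \<sigma> k x) = n}
           \<ge> 1 - exp (- (1/64) * real n * c\<^sup>2)"
proof -
  define L where "L = real n * (a - c) / (2 * a - c)"
  define U where "U = real n * a / (2 * a - c)"
  define On where "On = {i. i < n \<and> x ! i}"
  define Zs where "Zs = {i. i < n \<and> \<not> x ! i}"
  define m where "m = ones x"
  define t where "t = real n * c / 8"
  define k1 where "k1 = nat \<lceil>L\<rceil>"
  define k2 where "k2 = nat \<lfloor>U\<rfloor>"
  define K where "K = int (n div 2)"
  define Perm where "Perm = {\<sigma>. \<sigma> permutes {..<n}}"
  define G where "G = {\<sigma>. \<exists>k. 1 \<le> k \<and> k \<le> n \<and>
                  real n * (a - c) / (2 * a - c) \<le> real k \<and>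
                  real k \<le> real n * a / (2 * a - c) \<and>
                  2 * ones (hyp_sample \<sigma> k x) = n}"
  define Q1 where "Q1 S = (real (card (S \<inter> On)) \<ge> real k1 * (real (card ({..<n} \<inter> On)) / real (card {..<n::nat})) + t)" for S
  define Q2 where "Q2 S = (real (card (S \<inter> Zs)) \<ge> real k2 * (real (card ({..<n} \<inter> Zs)) / real (card {..<n::nat})) + t)" for S
  define E1 where "E1 = {\<sigma>. \<sigma> permutes {..<n} \<and> Q1 (\<sigma> ` {..<k1})}"
  define E2 where "E2 = {\<sigma>. \<sigma> permutes {..<n} \<and> Q2 (\<sigma> ` {..<k2})}"
  note W = window[OF a0 c0 ca nc, folded L_def U_def]
  have n0: "real n > 0"
  proof (rule ccontr)
    assume "\<not> real n > 0" then have "n = 0" by simp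
    then show False using nc a0 by simp
  qed
  have t0: "t \<ge> 0" unfolding t_def using n0 c0 by simp
  have L1: "L \<le> real k1" "real k1 < L + 1" unfolding k1_def using W(1) by linarith+
  have U1: "real k2 \<le> U" "real k2 > U - 1" unfolding k2_def using W(1,3) by linarith+
  have k1pos: "1 \<le> k1" unfolding k1_def using W(1) by linarith
  have k12: "k1 \<le> k2"
  proof -
    have "real k1 \<le> U" using L1 W(3) by linarith
    then have "int k1 \<le> \<lfloor>U\<rfloor>" by (simp add: le_floor_iff)
    then show ?thesis unfolding k2_def by simp
  qed
  have k2n: "k2 \<le> n" using U1 W(2) by linarith
  have cOn: "card On = m" unfolding On_def m_def ones_def length_filter_conv_card lx by simp
  have finOn: "finite On" "finite Zs" unfolding On_def Zs_def by auto
  have cZs: "card Zs = n - m"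
  proof -
    have "{..<n} = On \<union> Zs" "On \<inter> Zs = {}" unfolding On_def Zs_def by auto
    then have "card {..<n} = card On + card Zs" using finOn by (simp add: card_Un_disjoint)
    then show ?thesis using cOn by simp
  qed
  have mn: "m \<le> n"
  proof -
    have "card On \<le> card {..<n}" unfolding On_def by (intro card_mono) auto
    then show ?thesis using cOn by simp
  qed
  have hm: "real m = (1/2 + a) * real n" using ox m_def by simp
  have iOn: "{..<n} \<inter> On = On" "{..<n} \<inter> Zs = Zs" unfolding On_def Zs_def by auto
  have bnd: "exp (- 2 * t ^ 2 / real k) \<le> exp (- (1/32) * real n * c\<^sup>2)" if "0 < k" "k \<le> n" for k
  proof -
    have "2 * t ^ 2 / real n \<le> 2 * t ^ 2 / real k"
      using that by (intro divide_left_mono) auto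
    moreover have "2 * t ^ 2 / real n = (1/32) * real n * c\<^sup>2"
      unfolding t_def using n0 by (simp add: field_simps power2_eq_square)
    ultimately show ?thesis by simp
  qed
  have cE1: "real (card E1) \<le> fact n * exp (- (1/32) * real n * c\<^sup>2)"
  proof -
    have "card E1 = card {ys \<in> permutations_of_set {..<n}. Q1 (set (take k1 ys))}"
      unfolding E1_def using perm_list_card[OF order_trans[OF k12 k2n]] .
    also have "real \<dots> \<le> fact n * exp (- 2 * t ^ 2 / real k1)"
      using tail_list[of "{..<n}" k1 t On] k1pos k12 k2n t0 unfolding Q1_def by simp
    also have "\<dots> \<le> fact n * exp (- (1/32) * real n * c\<^sup>2)"
      using bnd[of k1] k1pos k12 k2n by (intro mult_left_mono) auto
    finally show ?thesis by simp
  qed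
  have cE2: "real (card E2) \<le> fact n * exp (- (1/32) * real n * c\<^sup>2)"
  proof -
    have "card E2 = card {ys \<in> permutations_of_set {..<n}. Q2 (set (take k2 ys))}"
      unfolding E2_def using perm_list_card[OF k2n] .
    also have "real \<dots> \<le> fact n * exp (- 2 * t ^ 2 / real k2)"
      using tail_list[of "{..<n}" k2 t Zs] k1pos k12 k2n t0 unfolding Q2_def by simp
    also have "\<dots> \<le> fact n * exp (- (1/32) * real n * c\<^sup>2)"
      using bnd[of k2] k1pos k12 k2n by (intro mult_left_mono) auto
    finally show ?thesis by simp
  qed
  have core: "\<sigma> \<in> G" if sP: "\<sigma> permutes {..<n}" and n1: "\<not> Q1 (\<sigma> ` {..<k1})" and n2: "\<not> Q2 (\<sigma> ` {..<k2})" for \<sigma>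
  proof -
    define H where "H k = card (\<sigma> ` {..<k} \<inter> On)" for k
    define f where "f k = int m + int k - 2 * int (H k)" for k
    have fo: "int (ones (hyp_sample \<sigma> k x)) = f k" if "k \<le> n" for k
      using ones_hyp[OF sP lx that] unfolding f_def H_def cOn[symmetric] On_def by simp
    have step: "\<bar>f (Suc i) - f i\<bar> \<le> 1" for i
    proof -
      have im: "\<sigma> ` {..<Suc i} = insert (\<sigma> i) (\<sigma> ` {..<i})" by (simp add: lessThan_Suc)
      have fin: "finite (\<sigma> ` {..<i} \<inter> On)" by simp
      have "H i \<le> H (Suc i)" unfolding H_def im by (intro card_mono) auto
      moreover have "H (Suc i) \<le> Suc (H i)"
      proof -
        have "H (Suc i) \<le> card (insert (\<sigma> i) (\<sigma> ` {..<i} \<inter> On))"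
          unfolding H_def im by (intro card_mono) auto
        also have "\<dots> \<le> Suc (H i)" unfolding H_def using fin by (simp add: card_insert_if)
        finally show ?thesis .
      qed
      ultimately show ?thesis unfolding f_def by simp
    qed
    have Kr: "real_of_int K = real n / 2" unfolding K_def using ev by auto
    have f1: "f k1 \<ge> K"
    proof -
      have "real (H k1) < real k1 * (real m / real n) + t"
        using n1 unfolding Q1_def H_def iOn cOn by simp
      moreover have "real k1 * (real m / real n) = real k1 * (1/2 + a)" using hm n0 by simp
      moreover have "a * (real n / 2 - real k1) \<ge> t"
      proof -
        have "a * (real n / 2 - real k1) \<ge> a * (real n / 2 - (L + 1))"
          using L1 a0 by (intro mult_left_mono) auto
        then show ?thesis using W(4) unfolding t_def by linarith
      qed
      ultimately have "real_of_int (f k1) > real n / 2"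
        unfolding f_def using hm by (simp add: algebra_simps)
      then show ?thesis using Kr by linarith
    qed
    have f2: "f k2 \<le> K"
    proof -
      define S where "S = \<sigma> ` {..<k2}"
      have Ssub: "S \<subseteq> {..<n}" unfolding S_def using permutes_image[OF sP] k2n by auto
      have cS: "card S = k2" unfolding S_def using permutes_inj_on[OF sP] by (simp add: card_image)
      have Su: "S = (S \<inter> On) \<union> (S \<inter> Zs)" and Sd: "(S \<inter> On) \<inter> (S \<inter> Zs) = {}"
        using Ssub unfolding On_def Zs_def by auto
      have "card ((S \<inter> On) \<union> (S \<inter> Zs)) = card (S \<inter> On) + card (S \<inter> Zs)"
        using finOn Sd by (intro card_Un_disjoint) auto
      then have "card S = card (S \<inter> On) + card (S \<inter> Zs)" using Su by simp
      then have Z: "card (S \<inter> Zs) = k2 - H k2" "H k2 \<le> k2" unfolding H_def S_def[symmetric] using cS by auto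
      have A: "real (card (S \<inter> Zs)) < real k2 * (real (n - m) / real n) + t"
        using n2 unfolding Q2_def S_def[symmetric] iOn cZs by simp
      have B: "real k2 * (real (n - m) / real n) = real k2 / 2 - a * real k2"
        using hm n0 mn by (simp add: field_simps of_nat_diff)
      have C: "a * (real k2 - real n / 2) \<ge> t"
      proof -
        have "a * (real k2 - real n / 2) \<ge> a * ((U - 1) - real n / 2)"
          using U1 a0 by (intro mult_left_mono) auto
        then show ?thesis using W(5) unfolding t_def by linarith
      qed
      have C': "a * (real k2 - real n / 2) = a * real k2 - a * real n / 2" by (simp add: algebra_simps)
      have Z': "real (card (S \<inter> Zs)) = real k2 - real (H k2)" using Z by (simp add: of_nat_diff)
      have F: "real_of_int (f k2) = real m + real k2 - 2 * real (H k2)" unfolding f_def by simp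
      have hm': "real m = real n / 2 + a * real n" using hm by (simp add: algebra_simps)
      have "real_of_int (f k2) < real n / 2"
        by (rule lin_aux[OF A B C C' Z' F hm'])
      then show ?thesis using Kr by linarith
    qed
    obtain i where i: "k1 \<le> i" "i \<le> k2" "(\<lambda>i. - f i) i = - K"
      using nat_intermed_int_val[of k1 k2 "\<lambda>i. - f i" "- K"] step k12 f1 f2
      by (auto simp: abs_minus_commute)
    have "int (ones (hyp_sample \<sigma> i x)) = K" using fo[of i] i k2n by simp
    then have "2 * ones (hyp_sample \<sigma> i x) = n" unfolding K_def using ev by simp
    then show ?thesis unfolding G_def using i k1pos k2n L1 U1 L_def U_def
      by (intro CollectI exI[of _ i]) (auto simp: L_def U_def)
  qed
  have finP: "finite Perm" unfolding Perm_def by (rule finite_permutations) simp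
  have neP: "Perm \<noteq> {}" unfolding Perm_def using permutes_id by blast
  have cP: "card Perm = fact n" unfolding Perm_def by (rule card_permutations) simp_all
  have sub: "Perm \<subseteq> (Perm \<inter> G) \<union> E1 \<union> E2"
    using core unfolding Perm_def E1_def E2_def by blast
  have "card Perm \<le> card ((Perm \<inter> G) \<union> E1 \<union> E2)"
    using finP sub by (intro card_mono) (auto simp: E1_def E2_def Perm_def[symmetric] intro: finite_subset)
  also have "\<dots> \<le> card (Perm \<inter> G) + card E1 + card E2"
    by (meson card_Un_le add_le_mono1 order_trans)
  finally have cc: "real (card Perm) \<le> real (card (Perm \<inter> G)) + real (card E1) + real (card E2)"
    by linarith
  define e where "e = exp (- (1/64) * real n * c\<^sup>2)"
  have e2: "exp (- (1/32) * real n * c\<^sup>2) = e * e" unfolding e_def by (simp add: exp_add[symmetric])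
  have ehalf: "e \<le> 1/2"
  proof -
    have "- (1/64) * real n * c\<^sup>2 \<le> - ln 2" using nc2 by simp
    then have "e \<le> exp (- ln 2)" unfolding e_def by simp
    then show ?thesis by (simp add: exp_minus)
  qed
  have e0: "e \<ge> 0" unfolding e_def by simp
  have "measure_pmf.prob (rand_perm n) G = real (card (Perm \<inter> G)) / real (card Perm)"
    unfolding rand_perm_def Perm_def[symmetric] by (rule measure_pmf_of_set[OF neP finP])
  also have "\<dots> \<ge> 1 - 2 * (e * e)"
  proof -
    have fp: "(fact n :: real) > 0" by simp
    have "real (card (Perm \<inter> G)) \<ge> fact n - 2 * fact n * (e * e)"
      using cc cE1 cE2 cP e2 by simp
    then show ?thesis using fp cP by (simp add: field_simps)
  qed
  finally have "measure_pmf.prob (rand_perm n) G \<ge> 1 - 2 * (e * e)" .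
  moreover have "2 * (e * e) \<le> e"
  proof -
    have "e * (2 * e) \<le> e * 1" using ehalf e0 by (intro mult_left_mono) auto
    then show ?thesis by (simp add: algebra_simps)
  qed
  ultimately show ?thesis unfolding G_def e_def by linarith
qed



theorem theorem3:
  fixes a :: real and c :: "nat \<Rightarrow> real"
  assumes "a > 0"
    and "\<forall>\<^sub>F n in sequentially. 0 < c n \<and> c n < a"
    and "(\<lambda>n. sqrt (ln (real n) / real n)) \<in> o(c)"
  shows "\<exists>C>0. \<forall>\<^sub>F n in sequentially. \<forall>x :: bool list.
           length x = n \<and> even n \<and> real (ones x) = (1/2 + a) * real n \<longrightarrow>
           measure_pmf.prob (rand_perm n)
             {\<sigma>. \<exists>k. 1 \<le> k \<and> k \<le> n \<and>
                  real n * (a - c n) / (2 * a - c n) \<le> real k \<and>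
                  real k \<le> real n * a / (2 * a - c n) \<and>
                  2 * ones (hyp_sample \<sigma> k x) = n}
           \<ge> 1 - exp (- C * real n * (c n)\<^sup>2)"
proof (intro exI[of _ "1/64"] conjI)
  define K where "K = max (64 * ln 2) (8 * a ^ 2)"
  have ev2: "\<forall>\<^sub>F n in sequentially. norm (sqrt (ln (real n) / real n)) \<le> 1 * norm (c n)"
    using landau_o.smallD[OF assms(3) zero_less_one] .
  have ev3: "\<forall>\<^sub>F n in sequentially. real n \<ge> exp K \<and> n \<ge> 1"
  proof -
    have "\<forall>\<^sub>F n in sequentially. n \<ge> nat \<lceil>exp K\<rceil> + 1" by (rule eventually_ge_at_top)
    then show ?thesis
    proof (rule eventually_mono)
      fix n :: nat assume "n \<ge> nat \<lceil>exp K\<rceil> + 1"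
      then show "real n \<ge> exp K \<and> n \<ge> 1" by linarith
    qed
  qed
  show "(1/64 :: real) > 0" by simp
  show "\<forall>\<^sub>F n in sequentially. \<forall>x :: bool list.
           length x = n \<and> even n \<and> real (ones x) = (1/2 + a) * real n \<longrightarrow>
           measure_pmf.prob (rand_perm n)
             {\<sigma>. \<exists>k. 1 \<le> k \<and> k \<le> n \<and>
                  real n * (a - c n) / (2 * a - c n) \<le> real k \<and>
                  real k \<le> real n * a / (2 * a - c n) \<and>
                  2 * ones (hyp_sample \<sigma> k x) = n}
           \<ge> 1 - exp (- (1/64) * real n * (c n)\<^sup>2)"
    using assms(2) ev2 ev3
  proof eventually_elim
    case (elim n)
    have c0: "0 < c n" and ca: "c n < a" using elim(1) by auto
    have n1: "n \<ge> 1" and nK: "real n \<ge> exp K" using elim(3) by auto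
    have n0: "real n > 0" using n1 by simp
    have lnK: "ln (real n) \<ge> K"
    proof -
      have "ln (exp K) \<le> ln (real n)" using nK n0 by (subst ln_le_cancel_iff) auto
      then show ?thesis by simp
    qed
    have ln0: "ln (real n) \<ge> 0" using n1 by simp
    have sq: "sqrt (ln (real n) / real n) \<le> c n" using elim(2) c0 by simp
    have "ln (real n) / real n = (sqrt (ln (real n) / real n))\<^sup>2" using ln0 n0 by simp
    also have "\<dots> \<le> (c n)\<^sup>2" using sq ln0 n0 by (intro power_mono) auto
    finally have "ln (real n) / real n \<le> (c n)\<^sup>2" .
    then have nc2: "real n * (c n)\<^sup>2 \<ge> ln (real n)" using n0 by (simp add: field_simps)
    have K1: "K \<ge> 64 * ln 2" "K \<ge> 8 * a ^ 2" unfolding K_def by auto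
    have nc2': "real n * (c n)\<^sup>2 \<ge> 64 * ln 2" using nc2 lnK K1 by linarith
    have nc: "real n * c n \<ge> 8 * a"
    proof -
      have "(real n * c n) * a \<ge> (real n * c n) * c n"
        using ca c0 n0 by (intro mult_left_mono) auto
      also have "(real n * c n) * c n = real n * (c n)\<^sup>2" by (simp add: power2_eq_square)
      finally have "(real n * c n) * a \<ge> 8 * a * a" using nc2 lnK K1 by (simp add: power2_eq_square)
      then show ?thesis using assms(1) by simp
    qed
    show ?case
    proof (intro allI impI)
      fix x :: "bool list"
      assume h: "length x = n \<and> even n \<and> real (ones x) = (1/2 + a) * real n"
      show "measure_pmf.prob (rand_perm n)
             {\<sigma>. \<exists>k. 1 \<le> k \<and> k \<le> n \<and>
                  real n * (a - c n) / (2 * a - c n) \<le> real k \<and>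
                  real k \<le> real n * a / (2 * a - c n) \<and>
                  2 * ones (hyp_sample \<sigma> k x) = n}
           \<ge> 1 - exp (- (1/64) * real n * (c n)\<^sup>2)"
        using main_n[OF assms(1) c0 ca nc nc2'] h by blast
    qed
  qed
qed

end
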